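(* Let $P$ be an $(\epsilon_1,\epsilon_2)$-significant instance of $k$-means clustering with $z$ outliers and let $\eta,\delta,\xi\in(0,1)$. If one uniformly selects a set $S$ of $\max\{\frac{3k}{\delta^2\epsilon_1}\log\frac{2k}{\eta},\frac{k}{2\xi^2\epsilon_1(1-\delta)}\log\frac{2k}{\eta}\}$ points at random from $P$, then with probability at least $(1-\eta)^2$, for every $1\le j\le k$, $$\sum_{q\in S\cap C^*_j}\|q-o^*_j\|^2\le(1+\delta)\frac{|S|}{n}\Big(\sum_{p\in C^*_j}\|p-o^*_j\|^2+\xi|C^*_j|\mathcal{L}^2\Big).$$
   Context: $P\subset\mathbb{R}^D$, $|P|=n$, $0<z<n$. $P_{opt}\subset P$ with $|P_{opt}|=n-z$ is the set of inliers of an optimal solution of $k$-means clustering with $z$ outliers, and $C^*_1,\dots,C^*_k$ are the optimal clusters forming $P_{opt}$; $o^*_j$ is the mean of $C^*_j$; $\mathcal{L}=\max_l\max_{p,q\in C^*_l}\|p-q\|$. The instance is $(\epsilon_1,\epsilon_2)$-significant ($\epsilon_1,\epsilon_2>0$) if $\min_j|C^*_j|\ge\frac{\epsilon_1}{k}n$ and $z=\frac{\epsilon_2}{k}n$. Sampling uniformly at random means each sample point is drawn independently and uniformly from $P$; $S$ is a multiset and sums over $S\cap C^*_j$ count multiplicity. *)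

theory Defs
  imports "HOL-Analysis.Analysis" "HOL-Probability.Probability"
begin

definition mean :: "'a::euclidean_space set \<Rightarrow> 'a" where
  "mean C = (1 / real (card C)) *\<^sub>R (\<Sum>p\<in>C. p)"

definition sse :: "'a::euclidean_space set \<Rightarrow> real" where
  "sse C = (\<Sum>p\<in>C. (norm (p - mean C))^2)"

definition is_k_clustering :: "nat \<Rightarrow> 'a set \<Rightarrow> (nat \<Rightarrow> 'a set) \<Rightarrow> bool" where
  "is_k_clustering k Q D \<longleftrightarrow>
     (\<Union>j\<in>{1..k}. D j) = Q \<and>
     (\<forall>i\<in>{1..k}. \<forall>j\<in>{1..k}. i \<noteq> j \<longrightarrow> D i \<inter> D j = {})"

definition kmeans_outliers_opt ::
  "'a::euclidean_space set \<Rightarrow> nat \<Rightarrow> nat \<Rightarrow> 'a set \<Rightarrow> (nat \<Rightarrow> 'a set) \<Rightarrow> bool" where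
  "kmeans_outliers_opt P k z Popt C \<longleftrightarrow>
     Popt \<subseteq> P \<and> card Popt = card P - z \<and> is_k_clustering k Popt C \<and>
     (\<forall>Q D. Q \<subseteq> P \<longrightarrow> card Q = card P - z \<longrightarrow> is_k_clustering k Q D \<longrightarrow>
        (\<Sum>j\<in>{1..k}. sse (C j)) \<le> (\<Sum>j\<in>{1..k}. sse (D j)))"

definition max_diam :: "nat \<Rightarrow> (nat \<Rightarrow> 'a::euclidean_space set) \<Rightarrow> real" where
  "max_diam k C = Max {dist p q | p q l. l \<in> {1..k} \<and> p \<in> C l \<and> q \<in> C l}"

definition significant ::
  "'a::euclidean_space set \<Rightarrow> nat \<Rightarrow> nat \<Rightarrow> (nat \<Rightarrow> 'a set) \<Rightarrow> real \<Rightarrow> real \<Rightarrow> bool" where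
  "significant P k z C \<epsilon>1 \<epsilon>2 \<longleftrightarrow>
     \<epsilon>1 > 0 \<and> \<epsilon>2 > 0 \<and>
     (\<forall>j\<in>{1..k}. real (card (C j)) \<ge> \<epsilon>1 / real k * real (card P)) \<and>
     real z = \<epsilon>2 / real k * real (card P)"

text \<open>Uniform sampling of m points independently and uniformly from P:
  the uniform distribution on all m-tuples of points of P.\<close>
definition sample_pmf :: "'a set \<Rightarrow> nat \<Rightarrow> (nat \<Rightarrow> 'a) pmf" where
  "sample_pmf P m = pmf_of_set (PiE {..<m} (\<lambda>_. P))"

end

theory Submission
  imports Defs
begin

lemma exp_aux1: "0 \<le> 1 + ((u::real) - 1) * exp u"
proof -
  have "1 - u \<le> exp (-u)" using exp_ge_add_one_self[of "-u"] by simp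
  hence "(1 - u) * exp u \<le> exp (-u) * exp u" by (intro mult_right_mono) auto
  also have "\<dots> = 1" by (simp add: exp_minus)
  finally show ?thesis by (simp add: algebra_simps)
qed

lemma exp_aux2: assumes "0 \<le> (u::real)" shows "0 \<le> u + 2 + (u - 2) * exp u"
proof -
  have "(\<lambda>x. x + 2 + (x - 2) * exp x) 0 \<le> (\<lambda>x. x + 2 + (x - 2) * exp x) u"
  proof (rule DERIV_nonneg_imp_nondecreasing[OF assms])
    fix x :: real
    show "\<exists>y. DERIV (\<lambda>x. x + 2 + (x - 2) * exp x) x :> y \<and> y \<ge> 0"
      by (rule exI[of _ "1 + (x - 1) * exp x"], rule conjI,
          (rule derivative_eq_intros refl)+, simp add: algebra_simps, rule exp_aux1)
  qed
  thus ?thesis by simp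
qed

lemma exp_aux3: assumes "0 \<le> (u::real)" shows "(1 - u/3) * (exp u - 1 - u) \<le> u^2/2"
proof -
  have "(\<lambda>x. 3 * x^2 - 2 * (3 - x) * (exp x - 1 - x)) 0 \<le> (\<lambda>x. 3 * x^2 - 2 * (3 - x) * (exp x - 1 - x)) u"
  proof (rule DERIV_nonneg_imp_nondecreasing[OF assms])
    fix x :: real assume "0 \<le> x"
    have d: "DERIV (\<lambda>x. 3 * x^2 - 2 * (3 - x) * (exp x - 1 - x)) x :> 
       (3 * (2 * x) - (2 * (0 - 1) * (exp x - 1 - x) + 2 * (3 - x) * (exp x - 0 - 1)))"
      by (intro derivative_eq_intros refl) auto
    have e: "(3 * (2 * x) - (2 * (0 - 1) * (exp x - 1 - x) + 2 * (3 - x) * (exp x - 0 - 1)))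
        = 2 * (x + 2 + (x - 2) * exp x)" by (simp add: algebra_simps)
    show "\<exists>y. DERIV (\<lambda>x. 3 * x^2 - 2 * (3 - x) * (exp x - 1 - x)) x :> y \<and> y \<ge> 0"
      using d e exp_aux2[OF \<open>0 \<le> x\<close>] by auto
  qed
  hence "2 * (3 - u) * (exp u - 1 - u) \<le> 3 * u^2" by simp
  moreover have "(1 - u/3) * (exp u - 1 - u) = (2 * (3 - u) * (exp u - 1 - u)) / 6" by (simp add: field_simps)
  ultimately show ?thesis by linarith
qed

lemma bernstein_step:
  fixes \<mu> \<Delta> :: real assumes "0 \<le> \<mu>" "0 < \<Delta>"
  shows "\<exists>u\<ge>0. \<mu> * (exp u - 1) - u * (\<mu> + \<Delta>) \<le> - (\<Delta>^2 / (2 * (\<mu> + \<Delta>/3)))"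
proof (cases "\<mu> = 0")
  case True
  show ?thesis using assms True
    by (intro exI[of _ 3]) (simp add: power2_eq_square field_simps)
next
  case False
  hence mu: "0 < \<mu>" using assms by simp
  define u where "u = \<Delta> / (\<mu> + \<Delta>/3)"
  have u0: "0 \<le> u" using mu assms unfolding u_def by simp
  have u3: "1 - u/3 = \<mu> / (\<mu> + \<Delta>/3)" using mu assms unfolding u_def by (simp add: field_simps)
  have pos: "0 < 1 - u/3" using u3 mu assms by simp
  have "exp u - 1 - u \<le> u^2 / 2 / (1 - u/3)"
    using exp_aux3[OF u0] pos by (simp add: field_simps mult.commute)
  hence "\<mu> * (exp u - 1) - u * (\<mu> + \<Delta>) \<le> \<mu> * (u^2 / 2 / (1 - u/3)) - u * \<Delta>"
  proof -
    have "\<mu> * (exp u - 1 - u) \<le> \<mu> * (u^2 / 2 / (1 - u/3))"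
      using mu \<open>exp u - 1 - u \<le> _\<close> by (intro mult_left_mono) auto
    thus ?thesis by (simp add: algebra_simps)
  qed
  also have "\<dots> = - (\<Delta>^2 / (2 * (\<mu> + \<Delta>/3)))"
  proof -
    define s where "s = \<mu> + \<Delta>/3"
    have s: "0 < s" using mu assms unfolding s_def by simp
    have us: "u = \<Delta>/s" unfolding u_def s_def by simp
    have "\<mu> * (u^2 / 2 / (1 - u/3)) = \<mu> * (u^2 / 2 / (\<mu>/s))"
      using u3 unfolding s_def by simp
    also have "\<dots> = \<mu> * ((\<Delta>/s)^2 / 2 / (\<mu>/s))" unfolding us ..
    also have "\<dots> = \<Delta>^2 / (2 * s)" using s mu by (simp add: field_simps power2_eq_square)
    finally have "\<mu> * (u^2 / 2 / (1 - u/3)) = \<Delta>^2 / (2 * s)" .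
    moreover have "u * \<Delta> = \<Delta>^2 / s" unfolding u_def s_def[symmetric] by (simp add: power2_eq_square)
    moreover have "\<Delta>^2 / (2 * s) - \<Delta>^2 / s = - (\<Delta>^2 / (2 * s))" using s by (simp add: field_simps)
    ultimately show ?thesis unfolding s_def[symmetric] by linarith
  qed
  finally show ?thesis using u0 by blast
qed

lemma final_alg:
  fixes \<mu> M A \<delta> \<xi> :: real
  assumes "0 \<le> \<mu>" "\<mu> \<le> M" "0 < \<delta>" "\<delta> < 1" "0 < \<xi>" "0 < M"
    and "A \<le> M * \<delta>^2 / 3" "A \<le> 2 * \<xi>^2 * (1 - \<delta>) * M" "0 < A"
  shows "A \<le> (\<delta> * \<mu> + (1 + \<delta>) * \<xi> * M)^2 / (2 * (\<mu> + (\<delta> * \<mu> + (1 + \<delta>) * \<xi> * M)/3))"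
proof -
  define \<Delta> where "\<Delta> = \<delta> * \<mu> + (1 + \<delta>) * \<xi> * M"
  have D1: "\<xi> * M \<le> \<Delta>"
  proof -
    have "0 \<le> \<delta> * \<mu>" "0 \<le> \<delta> * \<xi> * M" using assms by auto
    thus ?thesis unfolding \<Delta>_def by (simp add: algebra_simps)
  qed
  have D2: "4 * \<delta> * \<mu> * (\<xi> * M) \<le> \<Delta>^2"
  proof -
    have "\<delta> * \<mu> + \<xi> * M \<le> \<Delta>" unfolding \<Delta>_def using assms by (simp add: algebra_simps)
    moreover have "0 \<le> \<delta> * \<mu> + \<xi> * M" using assms by simp
    ultimately have "(\<delta> * \<mu> + \<xi> * M)^2 \<le> \<Delta>^2" by (rule power_mono)
    moreover have "4 * (\<delta> * \<mu>) * (\<xi> * M) \<le> (\<delta> * \<mu> + \<xi> * M)^2"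
    proof -
      have "0 \<le> (\<delta> * \<mu> - \<xi> * M)^2" by simp
      thus ?thesis by (simp add: power2_diff power2_sum algebra_simps)
    qed
    ultimately show ?thesis by (simp add: mult.assoc)
  qed
  have A2: "A^2 \<le> (2/3) * (\<delta> * \<xi> * M)^2"
  proof -
    have "A * A \<le> (M * \<delta>^2 / 3) * (2 * \<xi>^2 * (1 - \<delta>) * M)"
      using assms by (intro mult_mono) auto
    also have "\<dots> \<le> (M * \<delta>^2 / 3) * (2 * \<xi>^2 * M)"
      using assms by (intro mult_left_mono) auto
    finally show ?thesis by (simp add: power2_eq_square algebra_simps)
  qed
  have A3: "A \<le> (9/11) * (\<delta> * \<xi> * M)"
  proof (rule ccontr)
    assume "\<not> ?thesis"
    hence "(9/11) * (\<delta> * \<xi> * M) < A" by simp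
    moreover have "0 \<le> (9/11) * (\<delta> * \<xi> * M)" using assms by simp
    ultimately have "((9/11) * (\<delta> * \<xi> * M))^2 < A^2" by (rule power_strict_mono) auto
    moreover have "((9/11) * (\<delta> * \<xi> * M))^2 = (81/121) * (\<delta> * \<xi> * M)^2"
      by (simp add: power_mult_distrib power2_eq_square)
    moreover have "0 < (\<delta> * \<xi> * M)^2" using assms by simp
    ultimately show False using A2 by linarith
  qed
  have Dpos: "0 < \<Delta>" using D1 assms by (meson less_le_trans mult_pos_pos)
  have h1: "A * (6 * \<mu>) \<le> (54/44) * \<Delta>^2"
  proof -
    have "A * (6 * \<mu>) \<le> (9/11) * (\<delta> * \<xi> * M) * (6 * \<mu>)" using A3 assms by (intro mult_right_mono) auto
    also have "\<dots> = (54/44) * (4 * \<delta> * \<mu> * (\<xi> * M))" by simp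
    also have "\<dots> \<le> (54/44) * \<Delta>^2" using D2 by (simp add: ac_simps)
    finally show ?thesis .
  qed
  have h2: "A * (2 * \<Delta>) \<le> (72/44) * \<Delta>^2"
  proof -
    have "A * (2 * \<Delta>) \<le> (9/11) * (\<delta> * \<xi> * M) * (2 * \<Delta>)" using A3 Dpos by (intro mult_right_mono) auto
    also have "\<dots> \<le> (9/11) * (\<xi> * M) * (2 * \<Delta>)" using assms Dpos
      by (intro mult_right_mono) (auto simp: mult_le_cancel_right1 mult.assoc)
    also have "\<dots> \<le> (9/11) * \<Delta> * (2 * \<Delta>)" using D1 Dpos by (intro mult_right_mono) (auto simp: ac_simps)
    also have "\<dots> = (72/44) * \<Delta>^2" by (simp add: power2_eq_square)
    finally show ?thesis .
  qed
  have "A * (2 * (\<mu> + \<Delta>/3)) = (1/3) * (A * (6 * \<mu>)) + (1/3) * (A * (2 * \<Delta>))"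
    by (simp add: algebra_simps)
  moreover have gen: "\<And>x y z d::real. x = (1/3) * y + (1/3) * z \<Longrightarrow> y \<le> 54/44*d \<Longrightarrow> z \<le> 72/44*d \<Longrightarrow> 0 \<le> d \<Longrightarrow> x \<le> d"
    by linarith
  ultimately have "A * (2 * (\<mu> + \<Delta>/3)) \<le> \<Delta>^2" using h1 h2 zero_le_power2[of \<Delta>] by blast
  moreover have "0 < 2 * (\<mu> + \<Delta>/3)" using assms Dpos by simp
  ultimately show ?thesis unfolding \<Delta>_def[symmetric] by (simp add: field_simps)
qed

lemma chernoff_card:
  fixes P :: "'a set" and X :: "'a \<Rightarrow> real"
  assumes "finite P" "0 \<le> l"
  shows "real (card {S \<in> PiE {..<m} (\<lambda>_. P). t < (\<Sum>i<m. X (S i))})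
         \<le> exp (- (l * t)) * (\<Sum>x\<in>P. exp (l * X x))^m"
proof -
  define \<Omega> where "\<Omega> = PiE {..<m} (\<lambda>_. P)"
  have fin: "finite \<Omega>" unfolding \<Omega>_def using assms by (simp add: finite_PiE)
  define B where "B = {S \<in> \<Omega>. t < (\<Sum>i<m. X (S i))}"
  have "real (card B) = (\<Sum>S\<in>B. 1)" by simp
  also have "\<dots> \<le> (\<Sum>S\<in>B. exp (l * ((\<Sum>i<m. X (S i)) - t)))"
  proof (rule sum_mono)
    fix S assume "S \<in> B"
    hence "0 \<le> l * ((\<Sum>i<m. X (S i)) - t)" using assms unfolding B_def by simp
    thus "1 \<le> exp (l * ((\<Sum>i<m. X (S i)) - t))" by simp
  qed
  also have "\<dots> \<le> (\<Sum>S\<in>\<Omega>. exp (l * ((\<Sum>i<m. X (S i)) - t)))"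
    by (rule sum_mono2[OF fin]) (auto simp: B_def)
  also have "\<dots> = (\<Sum>S\<in>\<Omega>. exp (- (l * t)) * (\<Prod>i<m. exp (l * X (S i))))"
  proof (rule sum.cong[OF refl])
    fix S
    have "exp (l * ((\<Sum>i<m. X (S i)) - t)) = exp (- (l * t)) * exp (\<Sum>i<m. l * X (S i))"
      by (simp add: algebra_simps sum_distrib_left exp_add[symmetric])
    also have "exp (\<Sum>i<m. l * X (S i)) = (\<Prod>i<m. exp (l * X (S i)))" by (simp add: exp_sum)
    finally show "exp (l * ((\<Sum>i<m. X (S i)) - t)) = exp (- (l * t)) * (\<Prod>i<m. exp (l * X (S i)))" .
  qed
  also have "\<dots> = exp (- (l * t)) * (\<Sum>S\<in>\<Omega>. (\<Prod>i<m. exp (l * X (S i))))"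
    by (simp add: sum_distrib_left)
  also have "(\<Sum>S\<in>\<Omega>. (\<Prod>i<m. exp (l * X (S i)))) = (\<Prod>i<m. \<Sum>x\<in>P. exp (l * X x))"
    unfolding \<Omega>_def by (rule prod_sum_PiE[symmetric]) (use assms in auto)
  also have "\<dots> = (\<Sum>x\<in>P. exp (l * X x))^m" by simp
  finally show ?thesis unfolding B_def \<Omega>_def .
qed

lemma mgf_bound:
  fixes P :: "'a set" and X :: "'a \<Rightarrow> real"
  assumes "finite P" "P \<noteq> {}" "\<forall>x\<in>P. 0 \<le> X x \<and> X x \<le> D" "0 < D" "0 \<le> l"
  shows "(\<Sum>x\<in>P. exp (l * X x))
     \<le> real (card P) * exp ((\<Sum>x\<in>P. X x) * (exp (l * D) - 1) / (real (card P) * D))"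
proof -
  define n where "n = real (card P)"
  have n: "0 < n" unfolding n_def using assms by (simp add: card_gt_0_iff)
  have pt: "exp (l * X x) \<le> 1 + X x / D * (exp (l * D) - 1)" if "x \<in> P" for x
  proof -
    define a where "a = X x / D"
    have a: "0 \<le> a" "a \<le> 1" using assms that unfolding a_def by auto
    have "exp ((1 - a) *\<^sub>R 0 + a *\<^sub>R (l * D)) \<le> (1 - a) * exp 0 + a * exp (l * D)"
      by (rule convex_onD[OF exp_convex]) (use a in auto)
    moreover have "(1 - a) *\<^sub>R 0 + a *\<^sub>R (l * D) = l * X x" unfolding a_def using assms by simp
    ultimately show ?thesis unfolding a_def by (simp add: algebra_simps)
  qed
  have "(\<Sum>x\<in>P. exp (l * X x)) \<le> (\<Sum>x\<in>P. 1 + X x / D * (exp (l * D) - 1))"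
    by (rule sum_mono) (rule pt)
  also have "\<dots> = n + (\<Sum>x\<in>P. X x) * (exp (l * D) - 1) / D"
    unfolding n_def by (simp add: sum.distrib sum_distrib_right sum_divide_distrib)
  also have "\<dots> = n * (1 + (\<Sum>x\<in>P. X x) * (exp (l * D) - 1) / (n * D))"
    using n assms by (simp add: field_simps)
  also have "\<dots> \<le> n * exp ((\<Sum>x\<in>P. X x) * (exp (l * D) - 1) / (n * D))"
    using n by (intro mult_left_mono) auto
  finally show ?thesis unfolding n_def .
qed

lemma cluster_fail:
  fixes P :: "'a set" and X :: "'a \<Rightarrow> real"
  assumes "finite P" "P \<noteq> {}" "\<forall>x\<in>P. 0 \<le> X x \<and> X x \<le> D" "0 \<le> D"
    and "(\<Sum>x\<in>P. X x) \<le> c * D" "0 < c" "0 < \<delta>" "\<delta> < 1" "0 < \<xi>" "0 < A"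
    and "A \<le> (real m * c / real (card P)) * \<delta>^2 / 3"
    and "A \<le> 2 * \<xi>^2 * (1 - \<delta>) * (real m * c / real (card P))"
    and "t = (1 + \<delta>) * (real m / real (card P)) * ((\<Sum>x\<in>P. X x) + \<xi> * c * D)"
  shows "real (card {S \<in> PiE {..<m} (\<lambda>_. P). t < (\<Sum>i<m. X (S i))}) \<le> exp (- A) * real (card P) ^ m"
proof (cases "D = 0")
  case True
  have "{S \<in> PiE {..<m} (\<lambda>_. P). t < (\<Sum>i<m. X (S i))} = {}"
  proof -
    have X0: "X x = 0" if "x \<in> P" for x using assms(3) that True by force
    have "t = 0" using assms(13) True by (simp add: X0)
    moreover have "(\<Sum>i<m. X (S i)) = 0" if "S \<in> PiE {..<m} (\<lambda>_. P)" for S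
      using that by (intro sum.neutral) (auto simp: X0 PiE_iff)
    ultimately show ?thesis by auto
  qed
  hence "real (card {S \<in> PiE {..<m} (\<lambda>_. P). t < (\<Sum>i<m. X (S i))}) = 0" by (simp only: card.empty of_nat_0)
  thus ?thesis by simp
next
  case False
  hence D: "0 < D" using assms by simp
  define n where "n = real (card P)"
  have n: "0 < n" unfolding n_def using assms by (simp add: card_gt_0_iff)
  define s where "s = (\<Sum>x\<in>P. X x)"
  have s0: "0 \<le> s" unfolding s_def using assms(3) by (intro sum_nonneg) auto
  define \<mu> where "\<mu> = real m * s / (n * D)"
  define M where "M = real m * c / n"
  define \<Delta> where "\<Delta> = \<delta> * \<mu> + (1 + \<delta>) * \<xi> * M"
  have mu0: "0 \<le> \<mu>" unfolding \<mu>_def using s0 n D by simp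
  have M0: "0 < M"
  proof -
    have "0 < M * \<delta>^2 / 3" using assms(10,11) unfolding M_def n_def by linarith
    thus ?thesis using assms by (simp add: zero_less_mult_iff zero_less_divide_iff)
  qed
  have muM: "\<mu> \<le> M"
  proof -
    have "real m * s \<le> real m * (c * D)" using assms(5) unfolding s_def by (intro mult_left_mono) auto
    hence "real m * s / (n * D) \<le> real m * (c * D) / (n * D)" using n D by (intro divide_right_mono) auto
    also have "\<dots> = M" unfolding M_def using D by simp
    finally show ?thesis unfolding \<mu>_def .
  qed
  have Dpos: "0 < \<Delta>" unfolding \<Delta>_def using mu0 M0 assms by (intro add_nonneg_pos) auto
  obtain u where u: "0 \<le> u" "\<mu> * (exp u - 1) - u * (\<mu> + \<Delta>) \<le> - (\<Delta>^2 / (2 * (\<mu> + \<Delta>/3)))"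
    using bernstein_step[OF mu0 Dpos] by blast
  have "A \<le> \<Delta>^2 / (2 * (\<mu> + \<Delta>/3))"
    unfolding \<Delta>_def using final_alg[OF mu0 muM assms(7,8,9) M0 _ _ assms(10)] assms(11,12)
    unfolding M_def n_def by (simp add: mult.commute)
  with u have key: "\<mu> * (exp u - 1) - u * (\<mu> + \<Delta>) \<le> - A" by linarith
  define l where "l = u / D"
  have l0: "0 \<le> l" unfolding l_def using u D by simp
  have lD: "l * D = u" unfolding l_def using D by simp
  have lt: "l * t = u * (\<mu> + \<Delta>)"
    unfolding l_def assms(13) \<mu>_def \<Delta>_def M_def s_def[symmetric] n_def[symmetric]
    using D n by (simp add: field_simps)
  have "real (card {S \<in> PiE {..<m} (\<lambda>_. P). t < (\<Sum>i<m. X (S i))})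
        \<le> exp (- (l * t)) * (\<Sum>x\<in>P. exp (l * X x))^m"
    by (rule chernoff_card[OF assms(1) l0])
  also have "\<dots> \<le> exp (- (l * t)) * (n * exp (s * (exp (l * D) - 1) / (n * D)))^m"
    using mgf_bound[OF assms(1,2,3) D l0] unfolding n_def[symmetric] s_def[symmetric]
    by (intro mult_left_mono power_mono) (auto intro: sum_nonneg)
  also have "\<dots> = n^m * exp (\<mu> * (exp u - 1) - u * (\<mu> + \<Delta>))"
    unfolding lt lD power_mult_distrib exp_of_nat_mult[symmetric]
    by (simp add: \<mu>_def exp_diff exp_minus exp_add field_simps)
  also have "\<dots> \<le> n^m * exp (- A)" using key n by simp
  finally show ?thesis unfolding n_def by (simp add: mult.commute)
qed

lemma norm_minus_mean_le:
  fixes C :: "'a::euclidean_space set"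
  assumes "finite C" "C \<noteq> {}" "\<forall>p\<in>C. norm (x - p) \<le> L"
  shows "norm (x - mean C) \<le> L"
proof -
  define c where "c = real (card C)"
  have c: "0 < c" unfolding c_def using assms by (simp add: card_gt_0_iff)
  have "x - mean C = (1 / c) *\<^sub>R (\<Sum>p\<in>C. (x - p))"
    unfolding mean_def c_def[symmetric] using c
    by (simp add: sum_subtractf scaleR_diff_right c_def sum_constant_scaleR)
  hence "norm (x - mean C) = (1 / c) * norm (\<Sum>p\<in>C. (x - p))" using c by simp
  also have "\<dots> \<le> (1 / c) * (\<Sum>p\<in>C. norm (x - p))"
    using c by (intro mult_left_mono norm_sum) auto
  also have "\<dots> \<le> (1 / c) * (c * L)"
    using c assms unfolding c_def by (intro mult_left_mono sum_bounded_above[where K = L, simplified]) auto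
  also have "\<dots> = L" using c by simp
  finally show ?thesis .
qed

theorem lemma4:
  fixes P :: "'a::euclidean_space set" and k z :: nat and Popt :: "'a set"
    and C :: "nat \<Rightarrow> 'a set" and \<epsilon>1 \<epsilon>2 \<eta> \<delta> \<xi> :: real and m :: nat
  assumes "finite P" and "0 < z" and "z < card P" and "k \<ge> 1"
    and "kmeans_outliers_opt P k z Popt C"
    and "significant P k z C \<epsilon>1 \<epsilon>2"
    and "0 < \<eta>" "\<eta> < 1" "0 < \<delta>" "\<delta> < 1" "0 < \<xi>" "\<xi> < 1"
    and "m = nat \<lceil>max (3 * real k / (\<delta>^2 * \<epsilon>1) * ln (2 * real k / \<eta>))
                      (real k / (2 * \<xi>^2 * \<epsilon>1 * (1 - \<delta>)) * ln (2 * real k / \<eta>))\<rceil>"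
  shows "measure_pmf.prob (sample_pmf P m)
           {S. \<forall>j\<in>{1..k}.
              (\<Sum>i\<in>{i. i < m \<and> S i \<in> C j}. (norm (S i - mean (C j)))^2)
              \<le> (1 + \<delta>) * (real m / real (card P)) *
                 ((\<Sum>p\<in>C j. (norm (p - mean (C j)))^2)
                  + \<xi> * real (card (C j)) * (max_diam k C)^2)}
         \<ge> (1 - \<eta>)^2"
proof -
  define n where "n = real (card P)"
  have Pne: "P \<noteq> {}" using assms(3) by auto
  have n: "0 < n" unfolding n_def using assms(1) Pne by (simp add: card_gt_0_iff)
  have CP: "C j \<subseteq> P" if "j \<in> {1..k}" for j
    using assms(5) that unfolding kmeans_outliers_opt_def is_k_clustering_def by blast
  have e1: "0 < \<epsilon>1" and cardC: "\<And>j. j \<in> {1..k} \<Longrightarrow> \<epsilon>1 / real k * n \<le> real (card (C j))"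
    using assms(6) unfolding significant_def n_def by auto
  have kpos: "0 < real k" using assms(4) by simp
  have cpos: "0 < real (card (C j))" if "j \<in> {1..k}" for j
    using cardC[OF that] e1 kpos n by (smt (verit) divide_pos_pos mult_pos_pos)
  have finC: "finite (C j)" if "j \<in> {1..k}" for j using CP[OF that] assms(1) finite_subset by blast
  have neC: "C j \<noteq> {}" if "j \<in> {1..k}" for j using cpos[OF that] by auto
  define L where "L = max_diam k C"
  have distL: "dist p q \<le> L" if "j \<in> {1..k}" "p \<in> C j" "q \<in> C j" for j p q
  proof -
    have "{dist p q | p q l. l \<in> {1..k} \<and> p \<in> C l \<and> q \<in> C l} \<subseteq> (\<lambda>(p, q). dist p q) ` (P \<times> P)"
      using CP by fastforce
    hence "finite {dist p q | p q l. l \<in> {1..k} \<and> p \<in> C l \<and> q \<in> C l}"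
      using assms(1) by (meson finite_SigmaI finite_imageI finite_subset)
    thus ?thesis unfolding L_def max_diam_def using that by (intro Max_ge) blast+
  qed
  have L0: "0 \<le> L" using distL[of 1] neC[of 1] assms(4) by fastforce
  define D where "D = L^2"
  define X where "X j x = (if x \<in> C j then (norm (x - mean (C j)))^2 else 0)" for j x
  have Xb: "\<forall>x\<in>P. 0 \<le> X j x \<and> X j x \<le> D" if "j \<in> {1..k}" for j
  proof
    fix x assume "x \<in> P"
    show "0 \<le> X j x \<and> X j x \<le> D"
    proof (cases "x \<in> C j")
      case True
      have "norm (x - mean (C j)) \<le> L"
        using norm_minus_mean_le[OF finC[OF that] neC[OF that]] distL[OF that True]
        by (simp add: dist_norm)
      hence "(norm (x - mean (C j)))^2 \<le> L^2" by (intro power_mono) auto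
      thus ?thesis using True unfolding X_def D_def by simp
    qed (auto simp: X_def D_def)
  qed
  have sumX: "(\<Sum>x\<in>P. X j x) = (\<Sum>p\<in>C j. (norm (p - mean (C j)))^2)" if "j \<in> {1..k}" for j
  proof -
    have "(\<Sum>x\<in>P. X j x) = (\<Sum>p\<in>P \<inter> C j. (norm (p - mean (C j)))^2)"
      unfolding X_def by (rule sum.inter_restrict[symmetric]) (rule assms(1))
    also have "P \<inter> C j = C j" using CP[OF that] by blast
    finally show ?thesis .
  qed
  have sumXle: "(\<Sum>x\<in>P. X j x) \<le> real (card (C j)) * D" if "j \<in> {1..k}" for j
  proof -
    have "(\<Sum>x\<in>P. X j x) \<le> (\<Sum>x\<in>C j. D)"
      unfolding sumX[OF that]
      using Xb[OF that] CP[OF that] unfolding X_def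
      by (intro sum_mono) (smt (verit) subsetD)
    thus ?thesis by simp
  qed
  define A where "A = ln (2 * real k / \<eta>)"
  have A0: "0 < A" unfolding A_def using assms(7,8) kpos by (simp add: ln_gt_zero_iff field_simps) 
  have m1: "3 * real k / (\<delta>^2 * \<epsilon>1) * A \<le> real m" unfolding assms(13) A_def[symmetric]
    by (metis (no_types, lifting) le_nat_iff max.cobounded1 of_nat_le_iff order_trans real_nat_ceiling_ge) 
  have m2: "real k / (2 * \<xi>^2 * \<epsilon>1 * (1 - \<delta>)) * A \<le> real m" unfolding assms(13) A_def[symmetric]
    by (metis (no_types, lifting) le_nat_iff max.cobounded2 of_nat_le_iff order_trans real_nat_ceiling_ge)
  have Mge: "real m * \<epsilon>1 / real k \<le> real m * real (card (C j)) / n" if "j \<in> {1..k}" for j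
  proof -
    have "\<epsilon>1 / real k \<le> real (card (C j)) / n" using cardC[OF that] n by (simp add: field_simps)
    hence "real m * (\<epsilon>1 / real k) \<le> real m * (real (card (C j)) / n)" by (intro mult_left_mono) auto
    thus ?thesis by simp
  qed
  have A1: "A \<le> (real m * real (card (C j)) / n) * \<delta>^2 / 3" if "j \<in> {1..k}" for j
  proof -
    have "A = (3 * real k / (\<delta>^2 * \<epsilon>1) * A) * \<epsilon>1 / real k * \<delta>^2 / 3"
      using e1 kpos assms(9) by (simp add: field_simps)
    also have "\<dots> \<le> real m * \<epsilon>1 / real k * \<delta>^2 / 3"
      using m1 e1 kpos assms(9) by (intro divide_right_mono mult_right_mono) auto
    also have "\<dots> \<le> (real m * real (card (C j)) / n) * \<delta>^2 / 3"
      using Mge[OF that] by (intro divide_right_mono mult_right_mono) auto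
    finally show ?thesis .
  qed
  have A2: "A \<le> 2 * \<xi>^2 * (1 - \<delta>) * (real m * real (card (C j)) / n)" if "j \<in> {1..k}" for j
  proof -
    have pos: "0 < 2 * \<xi>^2 * (1 - \<delta>)" using assms(10,11) by simp
    have "A = 2 * \<xi>^2 * (1 - \<delta>) * ((real k / (2 * \<xi>^2 * \<epsilon>1 * (1 - \<delta>)) * A) * \<epsilon>1 / real k)"
      using e1 kpos assms(10,11) by (simp add: field_simps)
    also have "\<dots> \<le> 2 * \<xi>^2 * (1 - \<delta>) * (real m * \<epsilon>1 / real k)"
      using m2 e1 kpos pos by (intro mult_left_mono divide_right_mono mult_right_mono) auto
    also have "\<dots> \<le> 2 * \<xi>^2 * (1 - \<delta>) * (real m * real (card (C j)) / n)"
      using Mge[OF that] pos by (intro mult_left_mono) auto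
    finally show ?thesis .
  qed
  define t where "t j = (1 + \<delta>) * (real m / n) * ((\<Sum>x\<in>P. X j x) + \<xi> * real (card (C j)) * D)" for j
  define \<Omega> where "\<Omega> = PiE {..<m} (\<lambda>_. P)"
  define B where "B j = {S \<in> \<Omega>. t j < (\<Sum>i<m. X j (S i))}" for j
  have Bj: "real (card (B j)) \<le> exp (- A) * n ^ m" if "j \<in> {1..k}" for j
    unfolding B_def \<Omega>_def n_def
    by (rule cluster_fail[OF assms(1) Pne Xb[OF that] _ sumXle[OF that] cpos[OF that] assms(9,10,11) A0
          A1[OF that, unfolded n_def] A2[OF that, unfolded n_def]])
       (auto simp: D_def t_def n_def)
  have expA: "exp (- A) = \<eta> / (2 * real k)"
    unfolding A_def using assms(7) kpos by (simp add: exp_minus field_simps)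
  define G where "G = {S. \<forall>j\<in>{1..k}.
              (\<Sum>i\<in>{i. i < m \<and> S i \<in> C j}. (norm (S i - mean (C j)))^2)
              \<le> (1 + \<delta>) * (real m / real (card P)) *
                 ((\<Sum>p\<in>C j. (norm (p - mean (C j)))^2)
                  + \<xi> * real (card (C j)) * (max_diam k C)^2)}"
  have finO: "finite \<Omega>" unfolding \<Omega>_def using assms(1) by (simp add: finite_PiE)
  have neO: "\<Omega> \<noteq> {}" unfolding \<Omega>_def using Pne by (simp add: PiE_eq_empty_iff)
  have cardO: "real (card \<Omega>) = n ^ m" unfolding \<Omega>_def n_def using assms(1) by (simp add: card_PiE)
  have sub: "\<Omega> \<subseteq> (\<Omega> \<inter> G) \<union> (\<Union>j\<in>{1..k}. B j)"
  proof
    fix S assume S: "S \<in> \<Omega>"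
    show "S \<in> (\<Omega> \<inter> G) \<union> (\<Union>j\<in>{1..k}. B j)"
    proof (cases "S \<in> G")
      case True thus ?thesis using S by blast
    next
      case False
      then obtain j where j: "j \<in> {1..k}" and
        gt: "\<not> (\<Sum>i\<in>{i. i < m \<and> S i \<in> C j}. (norm (S i - mean (C j)))^2)
              \<le> (1 + \<delta>) * (real m / real (card P)) *
                 ((\<Sum>p\<in>C j. (norm (p - mean (C j)))^2)
                  + \<xi> * real (card (C j)) * (max_diam k C)^2)"
        unfolding G_def by blast
      have "(\<Sum>i\<in>{i. i < m \<and> S i \<in> C j}. (norm (S i - mean (C j)))^2) = (\<Sum>i<m. X j (S i))"
      proof -
        have eq: "{i. i < m \<and> S i \<in> C j} = {i \<in> {..<m}. S i \<in> C j}" by auto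
        have "(\<Sum>i\<in>{i. i < m \<and> S i \<in> C j}. (norm (S i - mean (C j)))^2)
            = (\<Sum>i\<in>{..<m}. if S i \<in> C j then (norm (S i - mean (C j)))^2 else 0)"
          by (subst eq) (rule sum.inter_filter, simp)
        thus ?thesis unfolding X_def by simp
      qed
      hence "t j < (\<Sum>i<m. X j (S i))" using gt sumX[OF j]
        unfolding t_def n_def D_def L_def by simp
      thus ?thesis using S j unfolding B_def by blast
    qed
  qed
  have finB: "finite (B j)" for j unfolding B_def using finO by simp
  have "real (card \<Omega>) \<le> real (card ((\<Omega> \<inter> G) \<union> (\<Union>j\<in>{1..k}. B j)))"
    using sub finO finB by (intro of_nat_mono card_mono) auto
  also have "\<dots> \<le> real (card (\<Omega> \<inter> G)) + real (card (\<Union>j\<in>{1..k}. B j))"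
    using card_Un_le[of "\<Omega> \<inter> G" "\<Union>j\<in>{1..k}. B j"] by (simp only: of_nat_add[symmetric] of_nat_le_iff)
  also have "real (card (\<Union>j\<in>{1..k}. B j)) \<le> (\<Sum>j\<in>{1..k}. real (card (B j)))"
    using card_UN_le[of "{1..k}" B] by (simp only: of_nat_sum[symmetric] of_nat_le_iff finite_atLeastAtMost simp_thms)
  also have "\<dots> \<le> (\<Sum>j\<in>{1..k}. exp (- A) * n ^ m)" by (intro sum_mono Bj)
  also have "\<dots> = real k * (\<eta> / (2 * real k)) * n ^ m" unfolding expA by simp
  also have "\<dots> = \<eta> / 2 * n ^ m" using kpos by simp
  finally have "n ^ m * (1 - \<eta> / 2) \<le> real (card (\<Omega> \<inter> G))" unfolding cardO by (simp add: algebra_simps)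
  hence "1 - \<eta> / 2 \<le> real (card (\<Omega> \<inter> G)) / n ^ m" using n by (simp add: field_simps)
  moreover have "measure_pmf.prob (sample_pmf P m) G = real (card (\<Omega> \<inter> G)) / n ^ m"
    unfolding sample_pmf_def \<Omega>_def[symmetric] cardO[symmetric]
    by (rule measure_pmf_of_set[OF neO finO])
  moreover have "(1 - \<eta>)^2 \<le> 1 - \<eta> / 2" using assms(7,8) by (simp add: power2_eq_square algebra_simps)
  ultimately show ?thesis unfolding G_def by linarith
qed

end
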